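(* Let $a=\{a_k\}_{k=0}^\infty$ be a real sequence with $a_0>0$, $a_k\geq0$ for all $k$, $\lim_{k\to\infty}a_k=0$ and $\sum_{k=0}^\infty a_k=\infty$. Define $\{b_k\}_{k=0}^\infty$ by $b_0=1/a_0$ and $b_k=-\frac{1}{a_0}\sum_{j=0}^{k-1}a_{k-j}b_j$ for $k\geq1$, and let $u=\{u_k\}_{k=0}^\infty$ with $u_k=\sum_{j=0}^k b_j$. If $a$ has decay rate $\alpha\in[0,1]$ and $u$ has decay rate $\upsilon$, then $\upsilon\leq 1-\alpha$.
   Context: For $p\geq1$, $l^p$ denotes the space of real sequences $x=\{x_k\}_{k\ge0}$ with $\|x\|_p^p=\sum_{k=0}^\infty|x_k|^p<\infty$. For a sequence $x$ with $x_k\to0$, its decay rate is the number $1/p\in[0,1]$, where $p\geq1$ is such that $x\notin l^p$ but $x\in l^q$ for every $q>p$. The sequence $\{b_k\}$ gives the entries of the inverse of the half-infinite lower triangular Toeplitz matrix $A$ with entries $A_{ij}=a_{i-j}$ ($i\ge j$), and $u$ is called the fundamental matrix of $a$. *)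

theory Defs
  imports Complex_Main
begin

definition in_lp :: "real \<Rightarrow> (nat \<Rightarrow> real) \<Rightarrow> bool" where
  "in_lp p x \<longleftrightarrow> summable (\<lambda>k. \<bar>x k\<bar> powr p)"

text \<open>Decay rate 1/p of a null sequence x: x is not in l^p but in l^q for all q > p.
  The value 0 corresponds to p = infinity, read as: x is in no l^q with finite q \<ge> 1.\<close>
definition has_decay_rate :: "(nat \<Rightarrow> real) \<Rightarrow> real \<Rightarrow> bool" where
  "has_decay_rate x r \<longleftrightarrow> x \<longlonglongrightarrow> 0 \<and> 0 \<le> r \<and> r \<le> 1 \<and>
     (if r = 0 then (\<forall>q\<ge>1. \<not> in_lp q x)
      else (\<not> in_lp (1 / r) x \<and> (\<forall>q>1 / r. in_lp q x)))"

end

theory Submission imports Defs begin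

lemma young_simple:
  fixes x y r s :: real
  assumes r: "r > 1" and s: "s > 1" and rs: "1/r + 1/s = 1" and x: "x \<ge> 0" and y: "y \<ge> 0"
  shows "x * y \<le> x powr r + y powr s"
proof (cases "x = 0 \<or> y = 0")
  case True then show ?thesis by auto
next
  case False
  then have xp: "x > 0" and yp: "y > 0" using x y by auto
  have rs1: "r / s = r - 1" using rs r s by (simp add: field_simps)
  have sr1: "s / r = s - 1" using rs r s by (simp add: field_simps)
  show ?thesis
  proof (cases "y powr s \<le> x powr r")
    case True
    have "y = (y powr s) powr (1/s)" using yp s by (simp add: powr_powr)
    also have "\<dots> \<le> (x powr r) powr (1/s)" using True s by (intro powr_mono2) auto
    also have "\<dots> = x powr (r - 1)" using rs1 by (simp add: powr_powr)
    finally have "x * y \<le> x * x powr (r - 1)" using xp by simp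
    also have "\<dots> = x powr 1 * x powr (r - 1)" using xp by simp
    also have "\<dots> = x powr r" using powr_add[of x 1 "r-1"] by simp
    finally show ?thesis using yp by (smt (verit) powr_ge_zero)
  next
    case False
    have "x = (x powr r) powr (1/r)" using xp r by (simp add: powr_powr)
    also have "\<dots> \<le> (y powr s) powr (1/r)" using False r by (intro powr_mono2) auto
    also have "\<dots> = y powr (s - 1)" using sr1 by (simp add: powr_powr)
    finally have "x * y \<le> y powr (s - 1) * y" using yp by simp
    also have "\<dots> = y powr (s - 1) * y powr 1" using yp by simp
    also have "\<dots> = y powr s" using powr_add[of y "s-1" 1] by simp
    finally show ?thesis using xp by (smt (verit) powr_ge_zero)
  qed
qed

lemma young_scaled:
  fixes p q r s t :: real
  assumes r: "r > 1" and s: "s > 1" and rs: "1/r + 1/s = 1" and t: "t > 0" and p: "p \<ge> 0" and q: "q \<ge> 0"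
  shows "p * q \<le> t powr r * p powr r + t powr (-s) * q powr s"
proof -
  have "p * q = (t*p) * (q/t)" using t by simp
  also have "\<dots> \<le> (t*p) powr r + (q/t) powr s"
    using young_simple[OF r s rs, of "t*p" "q/t"] t p q by simp
  also have "\<dots> = t powr r * p powr r + t powr (-s) * q powr s"
    using t p q by (simp add: powr_mult powr_divide powr_minus_divide)
  finally show ?thesis .
qed

lemma conv_assoc:
  fixes x y :: "nat \<Rightarrow> real"
  shows "(\<Sum>j\<le>k. x (k-j) * (\<Sum>i\<le>j. y i)) = (\<Sum>m\<le>k. \<Sum>i\<le>m. x (m-i) * y i)"
proof -
  have "(\<Sum>j\<le>k. x (k-j) * (\<Sum>i\<le>j. y i)) = (\<Sum>j\<le>k. \<Sum>i\<le>j. x (k-j) * y i)"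
    by (simp add: sum_distrib_left)
  also have "\<dots> = (\<Sum>p\<in>Sigma {..k} (\<lambda>j. {..j}). x (k - fst p) * y (snd p))"
    by (simp add: sum.Sigma split_def)
  also have "\<dots> = (\<Sum>p\<in>Sigma {..k} (\<lambda>m. {..m}). x (fst p - snd p) * y (snd p))"
    by (rule sum.reindex_bij_witness[where i="\<lambda>(m,i). (k - m + i, i)" and j="\<lambda>(j,i). (k - j + i, i)"]) auto
  also have "\<dots> = (\<Sum>m\<le>k. \<Sum>i\<le>m. x (m-i) * y i)"
    by (simp add: sum.Sigma split_def)
  finally show ?thesis .
qed

lemma conv_small:
  fixes x y :: "nat \<Rightarrow> real" and r s :: real
  assumes r: "r > 1" and s: "s > 1" and rs: "1/r + 1/s = 1"
    and sx: "summable (\<lambda>k. \<bar>x k\<bar> powr r)" and sy: "summable (\<lambda>k. \<bar>y k\<bar> powr s)"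
    and xl: "x \<longlonglongrightarrow> 0"
  shows "\<exists>k. \<bar>\<Sum>j\<le>k. x (k-j) * y j\<bar> < 1"
proof -
  define A where "A = (\<Sum>k. \<bar>x k\<bar> powr r)"
  have A0: "A \<ge> 0" unfolding A_def by (rule suminf_nonneg[OF sx]) simp
  define t where "t = (1/(3*(A+1))) powr (1/r)"
  have t0: "t > 0" using A0 by (simp add: t_def)
  have tr: "t powr r = 1/(3*(A+1))" using A0 r by (simp add: t_def powr_powr)
  define C where "C = t powr (-s)"
  have C0: "C > 0" using t0 by (simp add: C_def)
  obtain N where N: "\<forall>n\<ge>N. norm (\<Sum>i. \<bar>y (i+n)\<bar> powr s) < 1/(3*C)"
    using suminf_exist_split[of "1/(3*C)", OF _ sy] C0 by auto
  have lim: "(\<lambda>k. \<Sum>j<N. \<bar>x (k-j)\<bar> * \<bar>y j\<bar>) \<longlonglongrightarrow> 0"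
  proof (rule tendsto_null_sum)
    fix j
    have "(\<lambda>k. x (k - j)) \<longlonglongrightarrow> 0"
      by (rule filterlim_compose[OF xl]) (rule filterlim_minus_const_nat_at_top)
    then have "(\<lambda>k. \<bar>x (k - j)\<bar>) \<longlonglongrightarrow> 0" by (rule tendsto_rabs_zero)
    then show "(\<lambda>k. \<bar>x (k-j)\<bar> * \<bar>y j\<bar>) \<longlonglongrightarrow> 0" by (rule tendsto_mult_left_zero)
  qed
  have "eventually (\<lambda>k. (\<Sum>j<N. \<bar>x (k-j)\<bar> * \<bar>y j\<bar>) < 1/3 \<and> k \<ge> N) sequentially"
    using order_tendstoD(2)[OF lim, of "1/3"] eventually_ge_at_top[of N]
    by (auto intro: eventually_conj)
  then obtain k where k1: "(\<Sum>j<N. \<bar>x (k-j)\<bar> * \<bar>y j\<bar>) < 1/3" and kN: "k \<ge> N"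
    by (auto simp: eventually_sequentially)
  have split: "{..k} = {..<N} \<union> {N..k}" using kN by auto
  have "\<bar>\<Sum>j\<le>k. x (k-j) * y j\<bar> \<le> (\<Sum>j\<le>k. \<bar>x (k-j)\<bar> * \<bar>y j\<bar>)"
    by (metis (no_types, lifting) abs_mult sum.cong sum_abs)
  also have "\<dots> = (\<Sum>j<N. \<bar>x (k-j)\<bar> * \<bar>y j\<bar>) + (\<Sum>j\<in>{N..k}. \<bar>x (k-j)\<bar> * \<bar>y j\<bar>)"
    unfolding split by (rule sum.union_disjoint) auto
  also have "(\<Sum>j\<in>{N..k}. \<bar>x (k-j)\<bar> * \<bar>y j\<bar>) \<le>
      (\<Sum>j\<in>{N..k}. t powr r * \<bar>x (k-j)\<bar> powr r + C * \<bar>y j\<bar> powr s)"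
    unfolding C_def by (rule sum_mono) (rule young_scaled[OF r s rs t0]; simp)
  also have "\<dots> = t powr r * (\<Sum>j\<in>{N..k}. \<bar>x (k-j)\<bar> powr r) + C * (\<Sum>j\<in>{N..k}. \<bar>y j\<bar> powr s)"
    by (simp add: sum.distrib sum_distrib_left)
  also have "(\<Sum>j\<in>{N..k}. \<bar>x (k-j)\<bar> powr r) \<le> A"
  proof -
    have "(\<Sum>j\<in>{N..k}. \<bar>x (k-j)\<bar> powr r) = (\<Sum>l\<in>(\<lambda>j. k-j) ` {N..k}. \<bar>x l\<bar> powr r)"
      by (subst sum.reindex) (auto simp: inj_on_def)
    also have "\<dots> \<le> A" unfolding A_def by (rule sum_le_suminf[OF sx]) auto
    finally show ?thesis .
  qed
  also have "(\<Sum>j\<in>{N..k}. \<bar>y j\<bar> powr s) < 1/(3*C)"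
  proof -
    have "(\<Sum>j\<in>{N..k}. \<bar>y j\<bar> powr s) = (\<Sum>i\<in>{0..k-N}. \<bar>y (i+N)\<bar> powr s)"
      using sum.shift_bounds_cl_nat_ivl[of "\<lambda>j. \<bar>y j\<bar> powr s" 0 N "k-N"] kN by simp
    also have "\<dots> \<le> (\<Sum>i. \<bar>y (i+N)\<bar> powr s)"
      by (rule sum_le_suminf) (auto intro: summable_ignore_initial_segment[OF sy])
    also have "\<dots> < 1/(3*C)" using N by auto
    finally show ?thesis .
  qed
  finally have "\<bar>\<Sum>j\<le>k. x (k-j) * y j\<bar> < 1/3 + t powr r * A + C * (1/(3*C))"
    using k1 t0 C0 by (auto intro!: add_strict_mono add_mono mult_left_mono mult_strict_left_mono)
  also have "\<dots> \<le> 1"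
  proof -
    have "t powr r * A \<le> 1/3" using A0 unfolding tr by (simp add: field_simps)
    then show ?thesis using C0 by simp
  qed
  finally show ?thesis by blast
qed

theorem theorem3:
  fixes a b u :: "nat \<Rightarrow> real" and \<alpha> \<upsilon> :: real
  assumes a0: "a 0 > 0"
    and a_nonneg: "\<And>k. a k \<ge> 0"
    and a_lim: "a \<longlonglongrightarrow> 0"
    and a_div: "\<not> summable a"
    and b0: "b 0 = 1 / a 0"
    and bk: "\<And>k. k \<ge> 1 \<Longrightarrow> b k = - (1 / a 0) * (\<Sum>j<k. a (k - j) * b j)"
    and u_def: "\<And>k. u k = (\<Sum>j\<le>k. b j)"
    and rate_a: "has_decay_rate a \<alpha>"
    and rate_u: "has_decay_rate u \<upsilon>"
  shows "\<upsilon> \<le> 1 - \<alpha>"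
proof -
  have e: "(\<Sum>i\<le>m. a (m-i) * b i) = (if m = 0 then 1 else 0)" for m
  proof (cases "m = 0")
    case True then show ?thesis using b0 a0 by simp
  next
    case False
    have "(\<Sum>i\<le>m. a (m-i) * b i) = (\<Sum>i<m. a (m-i) * b i) + a 0 * b m"
      by (simp add: lessThan_Suc_atMost[symmetric])
    also have "\<dots> = 0" using bk[of m] False a0 by simp
    finally show ?thesis using False by simp
  qed
  have c1: "(\<Sum>j\<le>k. a (k-j) * u j) = 1" for k
  proof -
    have "(\<Sum>j\<le>k. a (k-j) * u j) = (\<Sum>m\<le>k. \<Sum>i\<le>m. a (m-i) * b i)"
      unfolding u_def by (rule conv_assoc)
    also have "\<dots> = (\<Sum>m\<le>k. if m = 0 then 1 else 0)" by (simp add: e)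
    also have "\<dots> = 1" by (simp add: sum.delta)
    finally show ?thesis .
  qed
  from rate_a have al: "0 \<le> \<alpha>" "\<alpha> \<le> 1" and ra: "\<alpha> \<noteq> 0 \<Longrightarrow> \<forall>q>1/\<alpha>. in_lp q a"
    unfolding has_decay_rate_def by auto
  from rate_u have ul: "0 \<le> \<upsilon>" "\<upsilon> \<le> 1" and ru: "\<upsilon> \<noteq> 0 \<Longrightarrow> \<forall>q>1/\<upsilon>. in_lp q u"
    unfolding has_decay_rate_def by auto
  show ?thesis
  proof (rule ccontr)
    assume "\<not> ?thesis"
    then have gt: "\<alpha> + \<upsilon> > 1" by simp
    then have ap: "\<alpha> > 0" and up: "\<upsilon> > 0" using al ul by auto
    define d where "d = min \<alpha> (\<alpha> + \<upsilon> - 1) / 2"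
    have d0: "d > 0" "d < \<alpha>" "d < \<alpha> + \<upsilon> - 1" using ap gt by (auto simp: d_def)
    define r where "r = 1 / (\<alpha> - d)"
    define s where "s = 1 / (1 - \<alpha> + d)"
    have r1: "r > 1" using d0 al by (simp add: r_def field_simps)
    have s1: "s > 1" using d0 al by (simp add: s_def field_simps)
    have rs: "1/r + 1/s = 1" by (simp add: r_def s_def)
    have "r > 1/\<alpha>" unfolding r_def using d0 ap by (intro divide_strict_left_mono) auto
    then have ia: "in_lp r a" using ra ap by auto
    have "s > 1/\<upsilon>" unfolding s_def using d0 up al by (intro divide_strict_left_mono) auto
    then have iu: "in_lp s u" using ru up by auto
    obtain k where "\<bar>\<Sum>j\<le>k. a (k-j) * u j\<bar> < 1"
      using conv_small[OF r1 s1 rs _ _ a_lim] ia iu unfolding in_lp_def by blast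
    then show False using c1[of k] by simp
  qed
qed

end
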